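(* Let $\beta,\delta\in(0,1)$ and a positive integer $L$. For each $i$ consider the batch test $\tilde\phi^i_k=\mathbf 1\{\|\hat w^i_k-w^i_{\mathbf v}\|_1\ge\delta\}$ and the resulting batch test-then-punish profile $\bar{\mathbf s}_{\mathbf v}$, for some feasible payoff $\mathbf v$ with $v^i\ge\underline u^i$ for $i\in[N]$. Writing $\|w^j_{\mathbf v}\|_0=\sum_{\ell=1}^K\mathbf 1\{w^j_{\mathbf v}[a^j(\ell)]\ne0\}$, suppose that $\min_{j\in[N]}\|w^j_{\mathbf v}\|_0>1$ and $\delta<1-1/\min_{j\in[N]}\|w^j_{\mathbf v}\|_0$. Then $\mathbb P^{\bar{\mathbf s}_{\mathbf v}}(\kappa_{\boldsymbol\phi}<\infty)=1$.
   Context: Repeated game: $N$ players, finite pure action sets $\mathcal A^i=\{a^i(1),\dots,a^i(K)\}$, utilities $u^i:\mathcal A\to[0,1]$ extended multilinearly; feasible means $v^i\in\mathrm{conv}(\{u^i(a):a\in\mathcal A\})$. Public histories $h_t=(A_0,\dots,A_{t-1})$ of realized pure action profiles; each round players draw $A^i_t\sim s^i(h_t)$ independently; $\mathbb P^{\mathbf s}$ induced law. A mixed stage Nash equilibrium $\mathbf b$ is fixed, $\underline u^i=u^i(\mathbf b)$; $\mathbf w_{\mathbf v}=(w^1_{\mathbf v},\dots,w^N_{\mathbf v})$ with $u^i(\mathbf w_{\mathbf v})=v^i$. Batches $\mathcal B_k=\{Lk,\dots,L(k+1)-1\}$, $k_t=\lfloor t/L\rfloor$, $\hat w^i_k=L^{-1}(\sum_{t\in\mathcal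 B_k}\mathbf 1\{A^i_t=a^i(\ell)\})_{\ell=1}^K$. $\kappa_{\boldsymbol\phi}=\min_{i}\inf\{k\ge0:\tilde\phi^i_k=1\}$. Batch test-then-punish: $\bar s^j_{\mathbf v}(h_t)=w^j_{\mathbf v}$ if $k_t=0$; for $k_t\ge1$, $w^j_{\mathbf v}$ if $\prod_{k=1}^{k_t-1}\prod_i(1-\tilde\phi^i_k)=1$ and $b^j$ otherwise. *)

theory Defs
  imports "HOL-Probability.Probability"
begin

text \<open>Players are 0..N-1, pure actions of each player are 0..K-1 (action a^i(l+1) is index l).
A pure action profile is a list of length N. A mixed strategy is a function nat => real.\<close>

definition mixed :: "nat \<Rightarrow> (nat \<Rightarrow> real) \<Rightarrow> bool" where
  "mixed K \<sigma> \<longleftrightarrow> (\<forall>l. 0 \<le> \<sigma> l) \<and> (\<forall>l\<ge>K. \<sigma> l = 0) \<and> (\<Sum>l<K. \<sigma> l) = 1"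

definition profiles :: "nat \<Rightarrow> nat \<Rightarrow> nat list set" where
  "profiles N K = {a. length a = N \<and> (\<forall>j<N. a ! j < K)}"

definition mlext :: "nat \<Rightarrow> nat \<Rightarrow> (nat list \<Rightarrow> real) \<Rightarrow> (nat \<Rightarrow> nat \<Rightarrow> real) \<Rightarrow> real" where
  "mlext N K ui \<sigma> = (\<Sum>a\<in>profiles N K. (\<Prod>j<N. \<sigma> j (a ! j)) * ui a)"

definition mixed_NE :: "nat \<Rightarrow> nat \<Rightarrow> (nat \<Rightarrow> nat list \<Rightarrow> real) \<Rightarrow> (nat \<Rightarrow> nat \<Rightarrow> real) \<Rightarrow> bool" where
  "mixed_NE N K u b \<longleftrightarrow> (\<forall>j<N. mixed K (b j)) \<and>
     (\<forall>i<N. \<forall>\<sigma>. mixed K \<sigma> \<longrightarrow> mlext N K (u i) (b(i := \<sigma>)) \<le> mlext N K (u i) b)"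

definition feasible :: "nat \<Rightarrow> nat \<Rightarrow> (nat \<Rightarrow> nat list \<Rightarrow> real) \<Rightarrow> (nat \<Rightarrow> real) \<Rightarrow> bool" where
  "feasible N K u v \<longleftrightarrow> (\<exists>c. (\<forall>a\<in>profiles N K. 0 \<le> c a) \<and> (\<Sum>a\<in>profiles N K. c a) = 1 \<and>
      (\<forall>i<N. v i = (\<Sum>a\<in>profiles N K. c a * u i a)))"

definition l0 :: "nat \<Rightarrow> (nat \<Rightarrow> real) \<Rightarrow> nat" where
  "l0 K \<sigma> = card {l\<in>{..<K}. \<sigma> l \<noteq> 0}"

text \<open>Empirical frequency of action l of player i in batch k; A t is the realized profile at time t.\<close>
definition emp_freq :: "nat \<Rightarrow> (nat \<Rightarrow> nat list) \<Rightarrow> nat \<Rightarrow> nat \<Rightarrow> nat \<Rightarrow> real" where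
  "emp_freq L A i k l = (\<Sum>t\<in>{L*k..<L*(k+1)}. if A t ! i = l then 1 else 0) / real L"

definition batch_test :: "nat \<Rightarrow> nat \<Rightarrow> real \<Rightarrow> (nat \<Rightarrow> nat \<Rightarrow> real) \<Rightarrow> (nat \<Rightarrow> nat list) \<Rightarrow> nat \<Rightarrow> nat \<Rightarrow> bool" where
  "batch_test L K \<delta> w A i k \<longleftrightarrow> (\<Sum>l<K. \<bar>emp_freq L A i k l - w i l\<bar>) \<ge> \<delta>"

text \<open>kappa = min_i inf{k >= 0. phi~^i_k = 1}, in enat (infinity if never).\<close>
definition kappa :: "nat \<Rightarrow> nat \<Rightarrow> nat \<Rightarrow> real \<Rightarrow> (nat \<Rightarrow> nat \<Rightarrow> real) \<Rightarrow> (nat \<Rightarrow> nat list) \<Rightarrow> enat" where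
  "kappa N L K \<delta> w A = (INF i\<in>{..<N}. INF k\<in>{k. batch_test L K \<delta> w A i k}. enat k)"

text \<open>Batch test-then-punish strategy: mixed strategy of player j after public history h (h = [A_0,...,A_{t-1}]).\<close>
definition tp_strategy :: "nat \<Rightarrow> nat \<Rightarrow> nat \<Rightarrow> real \<Rightarrow> (nat \<Rightarrow> nat \<Rightarrow> real) \<Rightarrow> (nat \<Rightarrow> nat \<Rightarrow> real)
    \<Rightarrow> nat list list \<Rightarrow> nat \<Rightarrow> nat \<Rightarrow> real" where
  "tp_strategy N K L \<delta> w b h j =
     (let kt = length h div L in
      if kt = 0 then w j
      else if (\<forall>k\<in>{1..<kt}. \<forall>i<N. \<not> batch_test L K \<delta> w (\<lambda>s. h ! s) i k) then w j
      else b j)"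

definition path_prob :: "nat \<Rightarrow> (nat list list \<Rightarrow> nat \<Rightarrow> nat \<Rightarrow> real) \<Rightarrow> nat list list \<Rightarrow> real" where
  "path_prob N s h =
     (if \<forall>t<length h. length (h ! t) = N
      then (\<Prod>t<length h. \<Prod>j<N. s (take t h) j (h ! t ! j)) else 0)"

text \<open>M is the law P^s on infinite play paths: a probability measure on streams of profiles
  whose cylinder probabilities are given by path_prob (this determines it uniquely).\<close>
definition induced_law :: "nat \<Rightarrow> (nat list list \<Rightarrow> nat \<Rightarrow> nat \<Rightarrow> real) \<Rightarrow> nat list stream measure \<Rightarrow> bool" where
  "induced_law N s M \<longleftrightarrow> prob_space M \<and> sets M = sets (stream_space (count_space UNIV)) \<and>
     (\<forall>h. measure M {\<omega>\<in>space M. stake (length h) \<omega> = h} = path_prob N s h)"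

end

theory Submission
  imports Defs
begin


lemma emp_freq_cong:
  assumes "\<forall>s\<in>{L*k..<L*(k+1)}. A s = A' s"
  shows "emp_freq L A i k l = emp_freq L A' i k l"
  unfolding emp_freq_def using assms by (intro arg_cong2[where f="(/)"] sum.cong) auto

lemma batch_test_cong:
  assumes "\<forall>s\<in>{L*k..<L*(k+1)}. A s = A' s"
  shows "batch_test L K \<delta> w A i k = batch_test L K \<delta> w A' i k"
  unfolding batch_test_def using emp_freq_cong[OF assms] by simp

lemma kappa_fin:
  assumes "N \<ge> 1"
  shows "kappa N L K \<delta> w A < \<infinity> \<longleftrightarrow> (\<exists>i<N. \<exists>k. batch_test L K \<delta> w A i k)"
proof
  assume "kappa N L K \<delta> w A < \<infinity>"
  show "\<exists>i<N. \<exists>k. batch_test L K \<delta> w A i k"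
  proof (rule ccontr)
    assume "\<not> ?thesis"
    then have "\<And>x. x \<in> {..<N} \<Longrightarrow> Collect (batch_test L K \<delta> w A x) = {}" by auto
    then have "kappa N L K \<delta> w A = (INF i\<in>{..<N}. (\<top>::enat))" unfolding kappa_def
      by (intro INF_cong refl) (simp only: image_empty Inf_empty)
    then have "kappa N L K \<delta> w A = \<top>" using assms by simp
    with \<open>kappa N L K \<delta> w A < \<infinity>\<close> show False by (simp add: top_enat_def)
  qed
next
  assume "\<exists>i<N. \<exists>k. batch_test L K \<delta> w A i k"
  then obtain i k where ik: "i < N" "batch_test L K \<delta> w A i k" by blast
  have "kappa N L K \<delta> w A \<le> (INF k\<in>{k. batch_test L K \<delta> w A i k}. enat k)"
    unfolding kappa_def using ik by (intro INF_lower) auto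
  also have "\<dots> \<le> enat k" using ik by (intro INF_lower) auto
  finally have "kappa N L K \<delta> w A \<le> enat k" .
  moreover have "enat k < \<infinity>" by simp
  ultimately show "kappa N L K \<delta> w A < \<infinity>" by (rule le_less_trans)
qed

lemma fire:
  assumes "L \<ge> 1" "mixed K ww" "l < K" "0 < ww l" "ww l \<le> 1/2" "\<delta> < 1" "w 0 = ww"
    and "\<forall>t\<in>{L*n..<L*(n+1)}. A t ! 0 = l"
  shows "batch_test L K \<delta> w A 0 n"
proof -
  have e: "emp_freq L A 0 n l' = (if l' = l then 1 else 0)" for l'
  proof -
    have "(\<Sum>t\<in>{L*n..<L*(n+1)}. if A t ! 0 = l' then 1 else 0) = (if l' = l then real L else 0)"
      using assms(8) by (auto intro: sum.neutral)
    then show ?thesis unfolding emp_freq_def using assms(1) by auto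
  qed
  have s1: "(\<Sum>l'\<in>{..<K}-{l}. ww l') = 1 - ww l"
    using assms(2,3) sum.remove[of "{..<K}" l ww] unfolding mixed_def by auto
  have "(\<Sum>l'<K. \<bar>emp_freq L A 0 n l' - w 0 l'\<bar>) = \<bar>1 - ww l\<bar> + (\<Sum>l'\<in>{..<K}-{l}. \<bar>emp_freq L A 0 n l' - w 0 l'\<bar>)"
    using assms(3,7) by (subst sum.remove[of _ l]) (auto simp: e)
  also have "(\<Sum>l'\<in>{..<K}-{l}. \<bar>emp_freq L A 0 n l' - w 0 l'\<bar>) = (\<Sum>l'\<in>{..<K}-{l}. ww l')"
    using assms(2,7) unfolding mixed_def by (intro sum.cong) (auto simp: e)
  also have "\<bar>1 - ww l\<bar> = 1 - ww l" using assms(5) by simp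
  finally have "(\<Sum>l'<K. \<bar>emp_freq L A 0 n l' - w 0 l'\<bar>) = 2 * (1 - ww l)" using s1 by simp
  then show ?thesis unfolding batch_test_def using assms(5,6) by simp
qed




locale tpl =
  fixes N K L :: nat and \<delta> :: real and wv b :: "nat \<Rightarrow> nat \<Rightarrow> real" and M :: "nat list stream measure"
  assumes N1: "N \<ge> 1" and L1: "L \<ge> 1" and dl: "\<delta> < 1"
    and wm: "\<forall>j<N. mixed K (wv j)" and bm: "\<forall>j<N. mixed K (b j)"
    and law: "induced_law N (tp_strategy N K L \<delta> wv b) M"
    and supp: "l0 K (wv 0) \<ge> 2"
begin

abbreviation "s \<equiv> tp_strategy N K L \<delta> wv b"
abbreviation "pp \<equiv> path_prob N s"

lemma PS: "prob_space M" using law unfolding induced_law_def by blast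

lemma sets_eq: "sets M = sets (stream_space (count_space UNIV))"
  using law unfolding induced_law_def by blast

lemma spaceM: "space M = UNIV"
  using sets_eq_imp_space_eq[OF sets_eq] by (simp add: space_stream_space streams_UNIV)

lemma cyl: "length h = m \<Longrightarrow> measure M {\<omega>. stake m \<omega> = h} = pp h"
  using law spaceM unfolding induced_law_def by auto

lemma meas: "{\<omega>. stake m \<omega> \<in> A} \<in> sets M"
proof -
  have "stake m \<in> measurable M (count_space UNIV)"
    using measurable_cong_sets[OF sets_eq refl] measurable_stake by blast
  from measurable_sets[OF this, of A] show ?thesis using spaceM by (simp add: vimage_def)
qed

lemma meas1: "{\<omega>. stake m \<omega> = h} \<in> sets M"
  using meas[of m "{h}"] by simp

lemma strat_mixed: "j < N \<Longrightarrow> mixed K (s h j)"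
  using wm bm unfolding tp_strategy_def Let_def by auto

definition H :: "nat \<Rightarrow> nat list list set" where
  "H m = {h. length h = m \<and> (\<forall>t<m. h!t \<in> profiles N K)}"

lemma finite_profiles: "finite (profiles N K)"
proof -
  have "profiles N K \<subseteq> {xs. set xs \<subseteq> {..<K} \<and> length xs = N}"
    unfolding profiles_def by (auto simp: in_set_conv_nth)
  then show ?thesis using finite_lists_length_eq[of "{..<K}" N] finite_subset by blast
qed

lemma finite_H: "finite (H m)"
proof -
  have "H m \<subseteq> {xs. set xs \<subseteq> profiles N K \<and> length xs = m}"
    unfolding H_def by (auto simp: in_set_conv_nth)
  then show ?thesis using finite_lists_length_eq[OF finite_profiles, of m] finite_subset by blast
qed

lemma pp_zero:
  assumes "length h = m" "h \<notin> H m"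
  shows "pp h = 0"
proof (cases "\<forall>t<length h. length (h ! t) = N")
  case False then show ?thesis unfolding path_prob_def by auto
next
  case True
  then obtain t where t: "t < m" "h ! t \<notin> profiles N K" using assms unfolding H_def by auto
  then obtain j where j: "j < N" "h ! t ! j \<ge> K" using True assms unfolding profiles_def by force
  have "s (take t h) j (h ! t ! j) = 0" using strat_mixed[OF j(1)] j(2) unfolding mixed_def by auto
  then have "(\<Prod>j<N. s (take t h) j (h ! t ! j)) = 0" using j(1) by (intro prod_zero) auto
  then have "(\<Prod>t<length h. \<Prod>j<N. s (take t h) j (h ! t ! j)) = 0"
    using t(1) assms(1) by (intro prod_zero) auto
  then show ?thesis unfolding path_prob_def using True by simp
qed

lemma sum_law:
  assumes "A \<subseteq> {h. length h = m}"
  shows "measure M {\<omega>. stake m \<omega> \<in> A} = (\<Sum>h\<in>A \<inter> H m. pp h)"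
proof -
  interpret prob_space M by (rule PS)
  have eq: "{\<omega>. stake m \<omega> \<in> A} = (\<Union>h\<in>A \<inter> H m. {\<omega>. stake m \<omega> = h}) \<union> (\<Union>h\<in>A - H m. {\<omega>. stake m \<omega> = h})"
    by auto
  have null: "(\<Union>h\<in>A - H m. {\<omega>. stake m \<omega> = h}) \<in> null_sets M"
  proof (rule null_sets_UN')
    show "countable (A - H m)" by (rule countable_subset[OF subset_UNIV]) simp
  next
    fix h assume h: "h \<in> A - H m"
    then have "length h = m" using assms by auto
    then have "measure M {\<omega>. stake m \<omega> = h} = 0" using cyl pp_zero h by auto
    then show "{\<omega>. stake m \<omega> = h} \<in> null_sets M"
      using meas[of m "{h}"] by (intro null_setsI) (auto simp: emeasure_eq_measure)
  qed
  have "measure M {\<omega>. stake m \<omega> \<in> A} = measure M (\<Union>h\<in>A \<inter> H m. {\<omega>. stake m \<omega> = h})"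
  proof -
    have "(\<Union>h\<in>A \<inter> H m. {\<omega>. stake m \<omega> = h}) = {\<omega>. stake m \<omega> \<in> A \<inter> H m}" by auto
    then show ?thesis unfolding eq using meas[of m "A \<inter> H m"]
      by (intro measure_Un_null_set null) auto
  qed
  also have "\<dots> = (\<Sum>h\<in>A \<inter> H m. measure M {\<omega>. stake m \<omega> = h})"
    using meas1[of m] finite_H[of m]
    by (intro finite_measure_finite_Union) (auto simp: disjoint_family_on_def)
  also have "\<dots> = (\<Sum>h\<in>A \<inter> H m. pp h)"
    using assms by (intro sum.cong refl cyl) auto
  finally show ?thesis .
qed

end



context tpl begin

definition S :: "nat \<Rightarrow> nat list list set" where
  "S n = {h. length h = L*n \<and> (\<forall>k<n. \<forall>i<N. \<not> batch_test L K \<delta> wv (\<lambda>t. h!t) i k)}"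

definition F :: "nat \<Rightarrow> nat list stream set" where
  "F n = {\<omega>. \<forall>k<n. \<forall>i<N. \<not> batch_test L K \<delta> wv (snth \<omega>) i k}"

lemma F_eq: "F n = {\<omega>. stake (L*n) \<omega> \<in> S n}"
proof -
  have "batch_test L K \<delta> wv (snth \<omega>) i k = batch_test L K \<delta> wv (\<lambda>t. stake (L*n) \<omega> ! t) i k"
    if "k < n" for \<omega> i k
  proof (rule batch_test_cong, intro ballI)
    fix t assume "t \<in> {L*k..<L*(k+1)}"
    moreover have "L*(k+1) \<le> L*n" using that by (intro mult_le_mono2) simp
    ultimately show "\<omega> !! t = stake (L*n) \<omega> ! t" by simp
  qed
  then show ?thesis unfolding F_def S_def by auto
qed

lemma exists_l: "\<exists>l<K. 0 < wv 0 l \<and> wv 0 l \<le> 1/2"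
proof -
  have m0: "mixed K (wv 0)" using wm N1 by auto
  let ?A = "{l\<in>{..<K}. wv 0 l \<noteq> 0}"
  have "card ?A \<ge> 2" using supp unfolding l0_def .
  have fA: "finite ?A" by simp
  have "?A \<noteq> {}" using \<open>card ?A \<ge> 2\<close> by (metis card.empty not_numeral_le_zero)
  then obtain l1 where l1: "l1 \<in> ?A" by blast
  have "card (?A - {l1}) \<ge> 1" using \<open>card ?A \<ge> 2\<close> l1 fA by (simp add: card_Diff_singleton)
  then have "?A - {l1} \<noteq> {}" by (metis card.empty not_one_le_zero)
  then obtain l2 where "l2 \<in> ?A - {l1}" by blast
  then have l: "l1 \<in> ?A" "l2 \<in> ?A" "l1 \<noteq> l2" using l1 by auto
  have "wv 0 l1 + wv 0 l2 = (\<Sum>l\<in>{l1,l2}. wv 0 l)" using l(3) by simp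
  also have "\<dots> \<le> (\<Sum>l<K. wv 0 l)" using l m0 unfolding mixed_def by (intro sum_mono2) auto
  also have "\<dots> = 1" using m0 unfolding mixed_def by simp
  finally have "wv 0 l1 \<le> 1/2 \<or> wv 0 l2 \<le> 1/2" by linarith
  moreover have "0 < wv 0 l1" "0 < wv 0 l2" using l m0 unfolding mixed_def by (auto simp: less_le)
  ultimately show ?thesis using l by auto
qed

lemma exists_pos: "j < N \<Longrightarrow> \<exists>x<K. 0 < wv j x"
proof (rule ccontr)
  assume j: "j < N" and "\<not> (\<exists>x<K. 0 < wv j x)"
  then have "\<forall>x<K. wv j x = 0" using wm unfolding mixed_def by (auto simp: le_less)
  then have "(\<Sum>x<K. wv j x) = 0" by simp
  then show False using wm j unfolding mixed_def by simp
qed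

end



context tpl begin

definition "lstar = (SOME l. l<K \<and> 0 < wv 0 l \<and> wv 0 l \<le> 1/2)"
definition "cf j = (if j = 0 then lstar else SOME x. x<K \<and> 0 < wv j x)"
definition "astar = map cf [0..<N]"
definition "gs = replicate L astar"
definition "cc = (\<Prod>j<N. wv j (cf j))"
definition "q = cc ^ L"

lemma lstar: "lstar < K" "0 < wv 0 lstar" "wv 0 lstar \<le> 1/2"
  using someI_ex[OF exists_l] unfolding lstar_def by auto

lemma cf: "j < N \<Longrightarrow> cf j < K \<and> 0 < wv j (cf j)"
  using lstar someI_ex[OF exists_pos] unfolding cf_def by auto

lemma astar_prof: "astar \<in> profiles N K"
  using cf unfolding astar_def profiles_def by auto

lemma astar0: "astar ! 0 = lstar"
  using N1 unfolding astar_def cf_def by simp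

lemma cc_pos: "0 < cc" unfolding cc_def using cf by (intro prod_pos) auto

lemma cc_le1: "cc \<le> 1"
proof -
  have "wv j (cf j) \<le> 1" if j: "j < N" for j
  proof -
    have "wv j (cf j) \<le> (\<Sum>x<K. wv j x)" using wm j cf[OF j] unfolding mixed_def
      by (intro member_le_sum) auto
    then show ?thesis using wm j unfolding mixed_def by simp
  qed
  then show ?thesis unfolding cc_def using cf by (intro prod_le_1) (auto simp: less_imp_le)
qed

lemma q_pos: "0 < q" "q \<le> 1" unfolding q_def using cc_pos cc_le1 by (auto simp: power_le_one)

lemma strat_w:
  assumes h: "h \<in> S n" and t: "L*n \<le> t" "t < L*n+L" and j: "j < N"
  shows "s (take t (h @ gs)) j = wv j"
proof -
  have lh: "length h = L*n" using h unfolding S_def by auto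
  have lt: "length (take t (h @ gs)) = t" using t lh by (simp add: gs_def)
  have dv: "t div L = n" using t L1 by (intro div_nat_eqI) (auto simp: mult.commute)
  have "\<forall>k\<in>{1..<n}. \<forall>i<N. \<not> batch_test L K \<delta> wv (\<lambda>u. take t (h @ gs) ! u) i k"
  proof (intro ballI allI impI)
    fix k i assume k: "k \<in> {1..<n}" and i: "i < N"
    have "L*(k+1) \<le> L*n" using k by (intro mult_le_mono2) simp
    then have "batch_test L K \<delta> wv (\<lambda>u. take t (h @ gs) ! u) i k = batch_test L K \<delta> wv (\<lambda>u. h ! u) i k"
      using t lh by (intro batch_test_cong) (auto simp: nth_append)
    then show "\<not> batch_test L K \<delta> wv (\<lambda>u. take t (h @ gs) ! u) i k" using h k i unfolding S_def by auto
  qed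
  then show ?thesis unfolding tp_strategy_def Let_def lt dv by auto
qed

lemma pp_app:
  assumes h: "h \<in> S n \<inter> H (L*n)"
  shows "pp (h @ gs) = pp h * q"
proof -
  have lh: "length h = L*n" using h unfolding S_def by auto
  have lg: "length gs = L" unfolding gs_def by simp
  have ht: "t < L*n \<Longrightarrow> h ! t \<in> profiles N K" for t using h unfolding H_def by auto
  have c1: "\<forall>t<length h. length (h!t) = N" using ht lh unfolding profiles_def by auto
  have c2: "\<forall>t<length (h@gs). length ((h@gs)!t) = N" using ht lh lg astar_prof
    unfolding profiles_def by (auto simp: nth_append gs_def)
  have sp: "{..<L*n+L} = {..<L*n} \<union> {L*n..<L*n+L}" by auto
  let ?f = "\<lambda>t. \<Prod>j<N. s (take t (h@gs)) j ((h@gs) ! t ! j)"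
  have "(\<Prod>t<length (h@gs). ?f t) = (\<Prod>t<L*n. ?f t) * (\<Prod>t\<in>{L*n..<L*n+L}. ?f t)"
    unfolding sp lh lg length_append by (rule prod.union_disjoint) auto
  also have "(\<Prod>t<L*n. ?f t) = (\<Prod>t<length h. \<Prod>j<N. s (take t h) j (h ! t ! j))"
    using lh by (intro prod.cong refl) (auto simp: nth_append)
  also have "(\<Prod>t\<in>{L*n..<L*n+L}. ?f t) = (\<Prod>t\<in>{L*n..<L*n+L}. cc)"
  proof (intro prod.cong refl)
    fix t assume t: "t \<in> {L*n..<L*n+L}"
    have "(h@gs) ! t = astar" using t lh by (auto simp: nth_append gs_def)
    then show "?f t = cc" unfolding cc_def using strat_w[of h n t] h t
      by (intro prod.cong refl) (auto simp: astar_def)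
  qed
  also have "(\<Prod>t\<in>{L*n..<L*n+L}. cc) = q" unfolding q_def by simp
  finally show ?thesis unfolding path_prob_def using c1 c2 by simp
qed

end



context tpl begin

lemma F_meas: "F n \<in> sets M" unfolding F_eq by (rule meas)

lemma step: "measure M (F (Suc n)) \<le> (1 - q) * measure M (F n)"
proof -
  interpret prob_space M by (rule PS)
  define I where "I = (\<lambda>h. h @ gs) ` (S n \<inter> H (L*n))"
  define T where "T = {\<omega>. stake (L*n+L) \<omega> \<in> I}"
  have Tm: "T \<in> sets M" unfolding T_def by (rule meas)
  have lg: "length gs = L" unfolding gs_def by simp
  have sub1: "F (Suc n) \<subseteq> F n" unfolding F_def by auto
  have sub2: "T \<subseteq> F n"
  proof
    fix \<omega> assume "\<omega> \<in> T"
    then obtain h where h: "h \<in> S n \<inter> H (L*n)" "stake (L*n+L) \<omega> = h @ gs" unfolding T_def I_def by auto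
    have lh: "length h = L*n" using h unfolding S_def by auto
    have "stake (L*n) \<omega> = take (L*n) (stake (L*n+L) \<omega>)" by (simp add: take_stake)
    also have "\<dots> = h" using h(2) lh by simp
    finally show "\<omega> \<in> F n" unfolding F_eq using h by auto
  qed
  have disj: "F (Suc n) \<inter> T = {}"
  proof (rule ccontr)
    assume "F (Suc n) \<inter> T \<noteq> {}"
    then obtain \<omega> where w: "\<omega> \<in> F (Suc n)" "\<omega> \<in> T" by blast
    then obtain h where h: "h \<in> S n \<inter> H (L*n)" "stake (L*n+L) \<omega> = h @ gs" unfolding T_def I_def by auto
    have lh: "length h = L*n" using h unfolding S_def by auto
    have "\<forall>t\<in>{L*n..<L*(n+1)}. (snth \<omega>) t ! 0 = lstar"
    proof
      fix t assume t: "t \<in> {L*n..<L*(n+1)}"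
      then have "\<omega> !! t = stake (L*n+L) \<omega> ! t" by simp
      also have "\<dots> = astar" using h(2) t lh by (auto simp: nth_append gs_def)
      finally show "(snth \<omega>) t ! 0 = lstar" using astar0 by simp
    qed
    then have "batch_test L K \<delta> wv (snth \<omega>) 0 n" (is ?B)
    proof -
      have m0: "mixed K (wv 0)" using wm N1 by auto
      show ?B by (rule fire[where w=wv and ww="wv 0", OF L1 m0 lstar dl refl]) fact
    qed
    then show False using w(1) N1 unfolding F_def by auto
  qed
  have "measure M (F (Suc n)) + measure M T = measure M (F (Suc n) \<union> T)"
    using F_meas Tm disj by (intro finite_measure_Union[symmetric]) auto
  also have "\<dots> \<le> measure M (F n)" using sub1 sub2 F_meas by (intro finite_measure_mono) auto
  finally have A: "measure M (F (Suc n)) + measure M T \<le> measure M (F n)" .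
  have IH: "I \<subseteq> H (L*n+L)"
    using astar_prof unfolding I_def H_def S_def by (auto simp: nth_append gs_def)
  have "measure M T = (\<Sum>x\<in>I \<inter> H (L*n+L). pp x)" unfolding T_def
    by (rule sum_law) (auto simp: I_def S_def lg)
  also have "\<dots> = (\<Sum>x\<in>I. pp x)" using IH by (simp add: Int_absorb2)
  also have "\<dots> = (\<Sum>h\<in>S n \<inter> H (L*n). pp (h @ gs))" unfolding I_def
    by (rule sum.reindex_cong[where l="\<lambda>h. h @ gs"]) (auto simp: inj_on_def)
  also have "\<dots> = (\<Sum>h\<in>S n \<inter> H (L*n). pp h) * q" using pp_app by (simp add: sum_distrib_right)
  also have "(\<Sum>h\<in>S n \<inter> H (L*n). pp h) = measure M (F n)" unfolding F_eq
    by (rule sum_law[symmetric]) (auto simp: S_def)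
  finally show ?thesis using A by (simp add: algebra_simps)
qed

lemma bound: "measure M (F n) \<le> (1 - q) ^ n"
proof (induction n)
  case 0
  interpret prob_space M by (rule PS)
  have "F 0 = space M" unfolding F_def spaceM by simp
  then show ?case by simp
next
  case (Suc n)
  have "measure M (F (Suc n)) \<le> (1 - q) * measure M (F n)" by (rule step)
  also have "\<dots> \<le> (1 - q) * (1 - q) ^ n" using Suc q_pos by (intro mult_left_mono) auto
  finally show ?case by simp
qed

lemma final: "measure M {\<omega>\<in>space M. kappa N L K \<delta> wv (snth \<omega>) < \<infinity>} = 1"
proof -
  interpret prob_space M by (rule PS)
  have IF: "(\<Inter>n. F n) \<in> sets M" using F_meas by auto
  have eq: "{\<omega>\<in>space M. kappa N L K \<delta> wv (snth \<omega>) < \<infinity>} = space M - (\<Inter>n. F n)"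
    unfolding kappa_fin[OF N1] F_def spaceM by (auto; meson lessI)
  have z: "measure M (\<Inter>n. F n) \<le> 0"
  proof (rule LIMSEQ_le_const)
    show "(\<lambda>n. (1 - q) ^ n) \<longlonglongrightarrow> 0" using q_pos by (intro LIMSEQ_power_zero) auto
    show "\<exists>N. \<forall>n\<ge>N. measure M (\<Inter>n. F n) \<le> (1 - q) ^ n"
      using bound F_meas by (meson INF_lower UNIV_I finite_measure_mono order_trans)
  qed
  have "measure M (\<Inter>n. F n) = 0" using z measure_nonneg[of M] by (meson antisym)
  then show ?thesis unfolding eq using prob_compl[OF IF] by simp
qed

end


theorem mainTheorem10:
  fixes N K L :: nat and \<beta> \<delta> :: real
    and u :: "nat \<Rightarrow> nat list \<Rightarrow> real"
    and b wv :: "nat \<Rightarrow> nat \<Rightarrow> real" and v :: "nat \<Rightarrow> real"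
    and M :: "nat list stream measure"
  assumes "N \<ge> 1" and "K \<ge> 1" and "L \<ge> 1"
    and "0 < \<beta>" "\<beta> < 1" and "0 < \<delta>" "\<delta> < 1"
    and "\<forall>i<N. \<forall>a\<in>profiles N K. 0 \<le> u i a \<and> u i a \<le> 1"
    and "mixed_NE N K u b"
    and "feasible N K u v"
    and "\<forall>j<N. mixed K (wv j)"
    and "\<forall>i<N. mlext N K (u i) wv = v i"
    and "\<forall>i<N. v i \<ge> mlext N K (u i) b"
    and "Min ((\<lambda>j. l0 K (wv j)) ` {..<N}) > 1"
    and "\<delta> < 1 - 1 / real (Min ((\<lambda>j. l0 K (wv j)) ` {..<N}))"
    and "induced_law N (tp_strategy N K L \<delta> wv b) M"
  shows "measure M {\<omega>\<in>space M. kappa N L K \<delta> wv (snth \<omega>) < \<infinity>} = 1"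
proof -
  have bm: "\<forall>j<N. mixed K (b j)" using assms(9) unfolding mixed_NE_def by auto
  have "Min ((\<lambda>j. l0 K (wv j)) ` {..<N}) \<le> l0 K (wv 0)"
    using assms(1) by (intro Min_le) auto
  then have sp: "l0 K (wv 0) \<ge> 2" using assms(14) by linarith
  interpret tpl N K L \<delta> wv b M
    using assms(1,3,7,11,16) bm sp by unfold_locales auto
  show ?thesis by (rule final)
qed

end
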